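(* Let $X$ be a Banach space isomorphic to a uniformly convex Banach space. Then for every nonempty bounded closed convex $C\subset X$, every $\mathfrak{cm}$-nonexpansive map $T\colon C\to C$ has a fixed point.
   Context: For a bounded convex set $C$, a nonexpansive map $T\colon C\to C$ is $\mathfrak{cm}$-nonexpansive if for all $n\in\mathbb{N}$, $y\in C$ and sequences $(u_i)_{i=1}^\infty\subset C$: $\limsup_{i\to\infty}\sup_{A\subset\{1,\dots,n\}}\|\sum_{k\in A}(Tu_{i+k}-Ty)\|\le\limsup_{i\to\infty}\sup_{A\subset\{1,\dots,n\}}\|\sum_{k\in A}(u_{i+k}-y)\|$, where $\|\cdot\|$ is the norm of $X$. *)

theory Defs
  imports "HOL-Analysis.Analysis" "HOL-Library.Liminf_Limsup" "HOL-Library.Extended_Real"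
begin

definition uniformly_convex :: "'b::real_normed_vector itself \<Rightarrow> bool" where
  "uniformly_convex _ \<longleftrightarrow>
     (\<forall>e>0. \<exists>d>0. \<forall>x y::'b. norm x \<le> 1 \<and> norm y \<le> 1 \<and> norm (x - y) \<ge> e
        \<longrightarrow> norm ((x + y) /\<^sub>R 2) \<le> 1 - d)"

definition linear_isomorphism :: "('a::real_normed_vector \<Rightarrow> 'b::real_normed_vector) \<Rightarrow> bool" where
  "linear_isomorphism L \<longleftrightarrow> bounded_linear L \<and> bij L \<and> bounded_linear (inv L)"

definition nonexpansive_on :: "'a::real_normed_vector set \<Rightarrow> ('a \<Rightarrow> 'a) \<Rightarrow> bool" where
  "nonexpansive_on C T \<longleftrightarrow> T ` C \<subseteq> C \<and> (\<forall>x\<in>C. \<forall>y\<in>C. norm (T x - T y) \<le> norm (x - y))"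

definition cm_sup :: "nat \<Rightarrow> (nat \<Rightarrow> 'a::real_normed_vector) \<Rightarrow> 'a \<Rightarrow> nat \<Rightarrow> real" where
  "cm_sup n u y i = Max ((\<lambda>A. norm (\<Sum>k\<in>A. (u (i + k) - y))) ` Pow {1..n})"

definition cm_nonexpansive :: "'a::real_normed_vector set \<Rightarrow> ('a \<Rightarrow> 'a) \<Rightarrow> bool" where
  "cm_nonexpansive C T \<longleftrightarrow> nonexpansive_on C T \<and>
     (\<forall>n::nat. \<forall>y\<in>C. \<forall>u::nat \<Rightarrow> 'a. range u \<subseteq> C \<longrightarrow>
        limsup (\<lambda>i. ereal (cm_sup n (\<lambda>j. T (u j)) (T y) i))
          \<le> limsup (\<lambda>i. ereal (cm_sup n u y i)))"

end

theory Submission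
  imports Defs "HOL-Library.Ramsey"
begin

lemma uc_mid:
  assumes UC: "uniformly_convex TYPE('b::real_normed_vector)" and e: "e > 0"
  obtains d where "d > 0" "d \<le> 1/2"
    "\<And>a b::'b. \<And>R. R > 0 \<Longrightarrow> norm a \<le> R \<Longrightarrow> norm b \<le> R \<Longrightarrow> norm (a - b) \<ge> e * R
        \<Longrightarrow> norm (a + b) \<le> 2 * R * (1 - d)"
proof -
  obtain d0 where d0: "d0 > 0" and H: "\<And>x y::'b. norm x \<le> 1 \<and> norm y \<le> 1 \<and> norm (x - y) \<ge> e
        \<longrightarrow> norm ((x + y) /\<^sub>R 2) \<le> 1 - d0"
    using UC e unfolding uniformly_convex_def by blast
  define d where "d = min d0 (1/2)"
  have "d > 0" "d \<le> 1/2" using d0 by (auto simp: d_def)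
  moreover have "norm (a + b) \<le> 2 * R * (1 - d)"
    if R: "R > 0" and a: "norm a \<le> R" and b: "norm b \<le> R" and ab: "norm (a - b) \<ge> e * R" for a b :: 'b and R
  proof -
    define x where "x = a /\<^sub>R R"
    define y where "y = b /\<^sub>R R"
    have nx: "norm x \<le> 1" using a R by (simp add: x_def divide_simps)
    have ny: "norm y \<le> 1" using b R by (simp add: y_def divide_simps)
    have "x - y = (a - b) /\<^sub>R R" by (simp add: x_def y_def algebra_simps)
    hence nxyR: "R * norm (x - y) = norm (a - b)" using R by simp
    have "R * e \<le> R * norm (x - y)" using ab nxyR by (simp add: mult.commute)
    hence nxy: "e \<le> norm (x - y)" using R by simp
    have "norm ((x + y) /\<^sub>R 2) \<le> 1 - d0" using H nx ny nxy by blast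
    moreover have "a + b = (2 * R) *\<^sub>R ((x + y) /\<^sub>R 2)"
      using R by (simp add: x_def y_def scaleR_add_right)
    hence "norm (a + b) = (2 * R) * norm ((x + y) /\<^sub>R 2)"
      using R by (metis norm_scaleR abs_of_pos mult_pos_pos zero_less_numeral)
    ultimately have "norm (a + b) \<le> 2 * R * (1 - d0)"
      using R by (metis mult_left_mono less_eq_real_def mult_pos_pos zero_less_numeral)
    also have "\<dots> \<le> 2 * R * (1 - d)" using R by (simp add: d_def)
    finally show ?thesis .
  qed
  ultimately show ?thesis using that by blast
qed

definition CL :: "(nat \<Rightarrow> 'b::real_normed_vector) \<Rightarrow> real \<Rightarrow> nat set \<Rightarrow> nat \<Rightarrow> bool" where
  "CL w \<epsilon> Y m \<longleftrightarrow> (\<forall>A B. A \<subseteq> Y \<longrightarrow> B \<subseteq> Y \<longrightarrow> card A = m \<longrightarrow> card B = m \<longrightarrow>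
      (\<forall>a\<in>A. \<forall>b\<in>B. a < b) \<longrightarrow> norm (sum w A - sum w B) < \<epsilon> * real m)"

lemma CL_mono: "CL w \<epsilon> Y m \<Longrightarrow> Y' \<subseteq> Y \<Longrightarrow> CL w \<epsilon> Y' m"
  unfolding CL_def by blast

lemma close_lemma:
  fixes w :: "nat \<Rightarrow> 'b::real_normed_vector"
  assumes UC: "uniformly_convex TYPE('b)" and R0: "R0 > 0" and wb: "\<And>k. norm (w k - c) \<le> R0"
    and eps: "\<epsilon> > 0" and Y: "infinite Y"
  shows "\<exists>Y' m. Y' \<subseteq> Y \<and> infinite Y' \<and> m > 0 \<and> CL w \<epsilon> Y' m"
proof -
  have e: "\<epsilon> / R0 > 0" using eps R0 by simp
  obtain d where d: "d > 0" "d \<le> 1/2" and H: "\<And>a b::'b. \<And>R. R > 0 \<Longrightarrow> norm a \<le> R \<Longrightarrow> norm b \<le> R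
      \<Longrightarrow> norm (a - b) \<ge> (\<epsilon> / R0) * R \<Longrightarrow> norm (a + b) \<le> 2 * R * (1 - d)"
    using uc_mid[OF UC e] by blast
  have I: "\<exists>Y' m. Y' \<subseteq> Y \<and> infinite Y' \<and> m > 0 \<and> (CL w \<epsilon> Y' m \<or>
      (\<forall>A. A \<subseteq> Y' \<longrightarrow> card A = m \<longrightarrow> norm (sum w A - real m *\<^sub>R c) \<le> real m * ((1 - d) ^ k * R0)))"
    for k
  proof (induction k)
    case 0
    have B: "\<forall>A. A \<subseteq> Y \<longrightarrow> card A = 1 \<longrightarrow> norm (sum w A - real 1 *\<^sub>R c) \<le> real 1 * ((1 - d) ^ 0 * R0)"
    proof (intro allI impI)
      fix A :: "nat set" assume "A \<subseteq> Y" "card A = 1"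
      then obtain a where "A = {a}" using card_1_singletonE[OF \<open>card A = 1\<close>] by blast
      thus "norm (sum w A - real 1 *\<^sub>R c) \<le> real 1 * ((1 - d) ^ 0 * R0)" using wb[of a] by simp
    qed
    have "Y \<subseteq> Y \<and> infinite Y \<and> (1::nat) > 0 \<and> (CL w \<epsilon> Y 1 \<or>
      (\<forall>A. A \<subseteq> Y \<longrightarrow> card A = 1 \<longrightarrow> norm (sum w A - real 1 *\<^sub>R c) \<le> real 1 * ((1 - d) ^ 0 * R0)))"
      using Y B by blast
    then show ?case by blast
  next
    case (Suc k)
    then obtain Y' m where Y': "Y' \<subseteq> Y" "infinite Y'" "m > 0" and
      alt: "CL w \<epsilon> Y' m \<or> (\<forall>A. A \<subseteq> Y' \<longrightarrow> card A = m \<longrightarrow> norm (sum w A - real m *\<^sub>R c) \<le> real m * ((1 - d) ^ k * R0))"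
      by blast
    show ?case
    proof (cases "CL w \<epsilon> Y' m")
      case True
      then show ?thesis using Y' by blast
    next
      case False
      with alt have ball: "\<And>A. A \<subseteq> Y' \<Longrightarrow> card A = m \<Longrightarrow> norm (sum w A - real m *\<^sub>R c) \<le> real m * ((1 - d) ^ k * R0)"
        by blast
      define P where "P X \<longleftrightarrow> (\<forall>A B. A \<subseteq> X \<longrightarrow> B \<subseteq> X \<longrightarrow> card A = m \<longrightarrow> card B = m \<longrightarrow>
          (\<forall>a\<in>A. \<forall>b\<in>B. a < b) \<longrightarrow> norm (sum w A - sum w B) < \<epsilon> * real m)" for X
      define f where "f X = (if P X then 0 else 1::nat)" for X
      have fl: "\<forall>X. X \<subseteq> Y' \<and> finite X \<and> card X = 2 * m \<longrightarrow> f X < 2" by (simp add: f_def)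
      obtain Y'' t where Y'': "Y'' \<subseteq> Y'" "infinite Y''" "t < 2"
        and hom0: "\<forall>X. X \<subseteq> Y'' \<and> finite X \<and> card X = 2 * m \<longrightarrow> f X = t"
        using Ramsey[OF Y'(2) fl] by blast
      have hom: "\<And>X. X \<subseteq> Y'' \<Longrightarrow> finite X \<Longrightarrow> card X = 2 * m \<Longrightarrow> f X = t"
        using hom0 by blast
      show ?thesis
      proof (cases "t = 0")
        case True
        have "CL w \<epsilon> Y'' m"
          unfolding CL_def
        proof (intro allI impI)
          fix A B assume AB: "A \<subseteq> Y''" "B \<subseteq> Y''" "card A = m" "card B = m" "\<forall>a\<in>A. \<forall>b\<in>B. a < b"
          have fin: "finite A" "finite B" using AB(3,4) Y'(3) by (simp_all add: card_ge_0_finite)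
          have disj: "A \<inter> B = {}" using AB(5) by (metis disjoint_iff less_irrefl)
          have "card (A \<union> B) = 2 * m" using card_Un_disjoint[OF fin disj] AB by simp
          hence "f (A \<union> B) = 0" using hom[of "A \<union> B"] AB fin True by auto
          hence "P (A \<union> B)" unfolding f_def by (cases "P (A \<union> B)") auto
          thus "norm (sum w A - sum w B) < \<epsilon> * real m" using AB unfolding P_def by blast
        qed
        then show ?thesis using Y'' Y' by (intro exI[of _ Y''] exI[of _ m]) auto
      next
        case False
        hence t1: "t = 1" using Y''(3) by simp
        have "norm (sum w X - real (2 * m) *\<^sub>R c) \<le> real (2 * m) * ((1 - d) ^ Suc k * R0)"
          if X: "X \<subseteq> Y''" "card X = 2 * m" for X
        proof -
          have finX: "finite X" using X(2) Y'(3) by (simp add: card_ge_0_finite)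
          have "f X = 1" using hom[OF X(1) finX X(2)] t1 by simp
          hence "\<not> P X" unfolding f_def by (cases "P X") auto
          then obtain A B where AB: "A \<subseteq> X" "B \<subseteq> X" "card A = m" "card B = m" "\<forall>a\<in>A. \<forall>b\<in>B. a < b"
            and far0: "\<not> norm (sum w A - sum w B) < \<epsilon> * real m"
            unfolding P_def by blast
          have far: "norm (sum w A - sum w B) \<ge> \<epsilon> * real m" using far0 by simp
          have fin: "finite A" "finite B" using AB(3,4) Y'(3) by (simp_all add: card_ge_0_finite)
          have disj: "A \<inter> B = {}" using AB(5) by (metis disjoint_iff less_irrefl)
          have "card (A \<union> B) = 2 * m" using card_Un_disjoint[OF fin disj] AB by simp
          moreover have "A \<union> B \<subseteq> X" using AB by blast
          ultimately have XAB: "X = A \<union> B" using card_subset_eq[OF finX] X(2) by metis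
          have sX: "sum w X = sum w A + sum w B" using XAB sum.union_disjoint[OF fin disj] by simp
          define R where "R = real m * ((1 - d) ^ k * R0)"
          have Rpos: "R > 0" using Y'(3) d R0 by (simp add: R_def)
          have a: "norm (sum w A - real m *\<^sub>R c) \<le> R" using ball AB X Y'' unfolding R_def by blast
          have b: "norm (sum w B - real m *\<^sub>R c) \<le> R" using ball AB X Y'' unfolding R_def by blast
          have pk: "(1 - d) ^ k \<le> 1" using d by (intro power_le_one) auto
          have "(\<epsilon> / R0) * R = \<epsilon> * real m * (1 - d) ^ k" using R0 by (simp add: R_def)
          also have "\<dots> \<le> \<epsilon> * real m" using pk eps by (simp add: mult_left_le)
          also have "\<dots> \<le> norm ((sum w A - real m *\<^sub>R c) - (sum w B - real m *\<^sub>R c))" using far by simp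
          finally have "norm ((sum w A - real m *\<^sub>R c) + (sum w B - real m *\<^sub>R c)) \<le> 2 * R * (1 - d)"
            using H[OF Rpos a b] by blast
          moreover have "(sum w A - real m *\<^sub>R c) + (sum w B - real m *\<^sub>R c) = sum w X - real (2 * m) *\<^sub>R c"
          proof -
            have "real (2 * m) *\<^sub>R c = real m *\<^sub>R c + real m *\<^sub>R c"
              by (metis mult_2 of_nat_add scaleR_left_distrib)
            thus ?thesis using sX by (simp only:) (simp add: algebra_simps)
          qed
          moreover have "2 * R * (1 - d) = real (2 * m) * ((1 - d) ^ Suc k * R0)" by (simp add: R_def)
          ultimately show ?thesis by simp
        qed
        then show ?thesis using Y'' Y' by (intro exI[of _ Y''] exI[of _ "2 * m"]) auto
      qed
    qed
  qed
  obtain k where k: "(1 - d) ^ k < \<epsilon> / (2 * R0)"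
    using real_arch_pow_inv[of "\<epsilon> / (2 * R0)" "1 - d"] d eps R0 by auto
  obtain Y' m where Y': "Y' \<subseteq> Y" "infinite Y'" "m > 0" and
    alt: "CL w \<epsilon> Y' m \<or> (\<forall>A. A \<subseteq> Y' \<longrightarrow> card A = m \<longrightarrow> norm (sum w A - real m *\<^sub>R c) \<le> real m * ((1 - d) ^ k * R0))"
    using I[of k] by blast
  have "CL w \<epsilon> Y' m"
  proof (cases "CL w \<epsilon> Y' m")
    case False
    with alt have ball: "\<And>A. A \<subseteq> Y' \<Longrightarrow> card A = m \<Longrightarrow> norm (sum w A - real m *\<^sub>R c) \<le> real m * ((1 - d) ^ k * R0)"
      by blast
    have "(1 - d) ^ k * R0 < \<epsilon> / 2" using k R0 by (simp add: divide_simps mult.commute)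
    hence lt: "2 * (real m * ((1 - d) ^ k * R0)) < \<epsilon> * real m" using Y'(3) by simp
    have "CL w \<epsilon> Y' m" unfolding CL_def
    proof (intro allI impI)
      fix A B assume AB: "A \<subseteq> Y'" "B \<subseteq> Y'" "card A = m" "card B = m" "\<forall>a\<in>A. \<forall>b\<in>B. a < b"
      have "norm (sum w A - sum w B) \<le> norm (sum w A - real m *\<^sub>R c) + norm (sum w B - real m *\<^sub>R c)"
        using norm_triangle_ineq4[of "sum w A - real m *\<^sub>R c" "sum w B - real m *\<^sub>R c"] by simp
      also have "\<dots> \<le> 2 * (real m * ((1 - d) ^ k * R0))" using ball[OF AB(1,3)] ball[OF AB(2,4)] by simp
      finally show "norm (sum w A - sum w B) < \<epsilon> * real m" using lt by simp
    qed
    then show ?thesis .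
  qed
  then show ?thesis using Y' by blast
qed

lemma bs_lemma:
  fixes w :: "nat \<Rightarrow> 'b::real_normed_vector"
  assumes UC: "uniformly_convex TYPE('b)" and R0: "R0 > 0" and wb: "\<And>k. norm (w k - c) \<le> R0"
    and eps: "\<epsilon> > 0" and Y: "infinite Y"
  shows "\<exists>Y' A0. Y' \<subseteq> Y \<and> infinite Y' \<and> A0 \<subseteq> Y' \<and> card A0 > 0 \<and>
     (\<forall>A. finite A \<longrightarrow> A \<subseteq> Y' \<longrightarrow>
        norm (sum w A - real (card A) *\<^sub>R ((1 / real (card A0)) *\<^sub>R sum w A0))
          \<le> 2 * \<epsilon> * real (card A) + 2 * real (card A0) * R0)"
proof -
  obtain Y' m where Y': "Y' \<subseteq> Y" "infinite Y'" "m > 0" and cl: "CL w \<epsilon> Y' m"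
    using close_lemma[where w=w and c=c, OF UC R0 wb eps Y] by blast
  obtain A0 where A0: "finite A0" "card A0 = m" "A0 \<subseteq> Y'"
    using infinite_arbitrarily_large[OF Y'(2)] by blast
  define y where "y = (1 / real m) *\<^sub>R sum w A0"
  have my: "real m *\<^sub>R y = sum w A0" using Y'(3) by (simp add: y_def)
  have claim1: "norm (sum w A - real m *\<^sub>R y) < 2 * \<epsilon> * real m"
    if A: "A \<subseteq> Y'" "card A = m" for A
  proof -
    have finA: "finite A" using A(2) Y'(3) by (simp add: card_ge_0_finite)
    define N where "N = Max (A \<union> A0)"
    have "infinite (Y' - {..N})" using Y'(2) by simp
    then obtain B where B: "finite B" "card B = m" "B \<subseteq> Y' - {..N}"
      using infinite_arbitrarily_large by blast
    have finU: "finite (A \<union> A0)" using finA A0(1) by simp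
    have le: "x \<le> N" if "x \<in> A \<union> A0" for x
      unfolding N_def using Max_ge[OF finU that] .
    have gt: "N < b" if "b \<in> B" for b
    proof -
      have "b \<in> Y' - {..N}" using B(3) that by blast
      thus ?thesis by simp
    qed
    have ab: "\<forall>a\<in>A. \<forall>b\<in>B. a < b"
    proof (intro ballI)
      fix a b assume "a \<in> A" "b \<in> B"
      thus "a < b" using le[of a] gt[of b] by simp
    qed
    have a0b: "\<forall>a\<in>A0. \<forall>b\<in>B. a < b"
    proof (intro ballI)
      fix a b assume "a \<in> A0" "b \<in> B"
      thus "a < b" using le[of a] gt[of b] by simp
    qed
    have BY: "B \<subseteq> Y'" using B(3) by blast
    have 1: "norm (sum w A - sum w B) < \<epsilon> * real m"
      using cl A BY B(2) ab unfolding CL_def by blast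
    have 2: "norm (sum w A0 - sum w B) < \<epsilon> * real m"
      using cl A0 BY B(2) a0b unfolding CL_def by blast
    have "norm (sum w A - sum w A0) \<le> norm (sum w A - sum w B) + norm (sum w A0 - sum w B)"
      using norm_triangle_ineq4[of "sum w A - sum w B" "sum w A0 - sum w B"] by simp
    hence "norm (sum w A - sum w A0) < 2 * \<epsilon> * real m" using 1 2 by linarith
    thus ?thesis by (simp add: my)
  qed
  have "real m *\<^sub>R (y - c) = (\<Sum>k\<in>A0. w k - c)"
    by (simp add: sum_subtractf scaleR_diff_right my A0(2) sum_constant_scaleR)
  hence "real m * norm (y - c) = norm (\<Sum>k\<in>A0. w k - c)"
    by (metis norm_scaleR abs_of_nat)
  also have "\<dots> \<le> (\<Sum>k\<in>A0. norm (w k - c))" by (rule norm_sum)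
  also have "\<dots> \<le> (\<Sum>k\<in>A0. R0)" by (intro sum_mono wb)
  also have "\<dots> = real m * R0" using A0 by simp
  finally have yc: "norm (y - c) \<le> R0" using Y'(3) by simp
  have wy: "norm (w k - y) \<le> 2 * R0" for k
  proof -
    have "norm (w k - y) \<le> norm (w k - c) + norm (y - c)"
      using norm_triangle_ineq4[of "w k - c" "y - c"] by simp
    thus ?thesis using wb[of k] yc by simp
  qed
  have main: "\<forall>A. finite A \<longrightarrow> A \<subseteq> Y' \<longrightarrow> card A = n \<longrightarrow>
      norm (sum w A - real n *\<^sub>R y) \<le> 2 * \<epsilon> * real n + 2 * real m * R0" for n
  proof (induction n rule: less_induct)
    case (less n)
    show ?case
    proof (intro allI impI)
      fix A assume A: "finite A" "A \<subseteq> Y'" "card A = n"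
      show "norm (sum w A - real n *\<^sub>R y) \<le> 2 * \<epsilon> * real n + 2 * real m * R0"
      proof (cases "n < m")
        case True
        have "sum w A - real n *\<^sub>R y = (\<Sum>k\<in>A. w k - y)"
          using A by (simp add: sum_subtractf sum_constant_scaleR)
        hence "norm (sum w A - real n *\<^sub>R y) \<le> (\<Sum>k\<in>A. norm (w k - y))"
          by (simp add: norm_sum)
        also have "\<dots> \<le> (\<Sum>k\<in>A. 2 * R0)" by (intro sum_mono wy)
        also have "\<dots> = real n * (2 * R0)" using A by simp
        also have "\<dots> \<le> real m * (2 * R0)" using True R0 by (intro mult_right_mono) auto
        finally have "norm (sum w A - real n *\<^sub>R y) \<le> real m * (2 * R0)" .
        moreover have "0 \<le> 2 * \<epsilon> * real n" using eps by simp
        ultimately show ?thesis by linarith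
      next
        case False
        obtain B where B: "B \<subseteq> A" "card B = m" "finite B"
          using obtain_subset_with_card_n[of m A] False A(3) by auto
        have cAB: "card (A - B) = n - m" using B A by (simp add: card_Diff_subset)
        have nm: "n - m < n" using Y'(3) False by simp
        have finAB: "finite (A - B)" using A(1) by simp
        have subAB: "A - B \<subseteq> Y'" using A(2) by blast
        have IH: "norm (sum w (A - B) - real (n - m) *\<^sub>R y) \<le> 2 * \<epsilon> * real (n - m) + 2 * real m * R0"
          using less.IH[OF nm] finAB subAB cAB by blast
        have sB: "norm (sum w B - real m *\<^sub>R y) \<le> 2 * \<epsilon> * real m"
          using claim1[of B] B(1,2) A(2) by (meson less_imp_le order_trans)
        have sA: "sum w A = sum w (A - B) + sum w B" using sum.subset_diff[OF B(1) A(1)] .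
        have rn: "real n *\<^sub>R y = real (n - m) *\<^sub>R y + real m *\<^sub>R y"
          using False by (simp add: of_nat_diff scaleR_left_diff_distrib)
        have "sum w A - real n *\<^sub>R y = (sum w (A - B) - real (n - m) *\<^sub>R y) + (sum w B - real m *\<^sub>R y)"
          using sA rn by (simp add: algebra_simps)
        hence "norm (sum w A - real n *\<^sub>R y) \<le> norm (sum w (A - B) - real (n - m) *\<^sub>R y) + norm (sum w B - real m *\<^sub>R y)"
          by (metis norm_triangle_ineq)
        also have "\<dots> \<le> 2 * \<epsilon> * real (n - m) + 2 * real m * R0 + 2 * \<epsilon> * real m" using IH sB by simp
        also have "\<dots> = 2 * \<epsilon> * real n + 2 * real m * R0" using False by (simp add: of_nat_diff algebra_simps)
        finally show ?thesis .
      qed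
    qed
  qed
  have fin: "\<forall>A. finite A \<longrightarrow> A \<subseteq> Y' \<longrightarrow>
        norm (sum w A - real (card A) *\<^sub>R ((1 / real (card A0)) *\<^sub>R sum w A0))
          \<le> 2 * \<epsilon> * real (card A) + 2 * real (card A0) * R0"
  proof (intro allI impI)
    fix A assume "finite A" "A \<subseteq> Y'"
    hence "norm (sum w A - real (card A) *\<^sub>R y) \<le> 2 * \<epsilon> * real (card A) + 2 * real m * R0"
      using main[of "card A"] by blast
    thus "norm (sum w A - real (card A) *\<^sub>R ((1 / real (card A0)) *\<^sub>R sum w A0))
          \<le> 2 * \<epsilon> * real (card A) + 2 * real (card A0) * R0"
      by (simp only: y_def A0(2))
  qed
  have "card A0 > 0" using A0(2) Y'(3) by simp
  thus ?thesis using Y'(1,2) A0(3) fin by blast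
qed

lemma limit_arg:
  fixes a b c :: real
  assumes "\<And>n::nat. n \<ge> 1 \<Longrightarrow> a \<le> b + c / real n"
  shows "a \<le> b"
proof (rule ccontr)
  assume "\<not> a \<le> b"
  hence ab: "a - b > 0" by simp
  obtain n :: nat where n: "\<bar>c\<bar> / (a - b) < real n" using reals_Archimedean2 by blast
  have n1: "n \<ge> 1"
  proof -
    have "0 \<le> \<bar>c\<bar> / (a - b)" using ab by simp
    hence "real n > 0" using n by linarith
    thus ?thesis by simp
  qed
  have "\<bar>c\<bar> < real n * (a - b)" using n ab by (simp add: divide_simps)
  hence "c / real n < a - b" using n1 by (simp add: divide_simps mult.commute)
  thus False using assms[OF n1] by linarith
qed

lemma afps:
  fixes C :: "'a::banach set"
  assumes C: "C \<noteq> {}" "closed C" "convex C" and R: "\<And>x. x \<in> C \<Longrightarrow> norm x \<le> R"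
    and ne: "nonexpansive_on C T"
  shows "\<exists>u. \<forall>j. u j \<in> C \<and> norm (T (u j) - u j) \<le> 2 * R / (real j + 2)"
proof -
  obtain x0 where x0: "x0 \<in> C" using C(1) by blast
  have TC: "T ` C \<subseteq> C" and TL: "\<And>x y. x \<in> C \<Longrightarrow> y \<in> C \<Longrightarrow> norm (T x - T y) \<le> norm (x - y)"
    using ne unfolding nonexpansive_on_def by auto
  have "\<exists>x. x \<in> C \<and> norm (T x - x) \<le> 2 * R / (real j + 2)" for j
  proof -
    define t where "t = (real j + 1) / (real j + 2)"
    have t0: "0 \<le> t" "t < 1" by (auto simp: t_def divide_simps)
    have t1: "1 - t = 1 / (real j + 2)" by (simp add: t_def divide_simps)
    define f where "f x = (1 - t) *\<^sub>R x0 + t *\<^sub>R T x" for x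
    have fC: "f ` C \<subseteq> C"
    proof
      fix z assume "z \<in> f ` C"
      then obtain x where x: "x \<in> C" "z = f x" by blast
      have "T x \<in> C" using TC x by blast
      thus "z \<in> C" unfolding x(2) f_def using convexD[OF C(3) x0 \<open>T x \<in> C\<close>] t0 by simp
    qed
    have lip: "dist (f x) (f y) \<le> t * dist x y" if "x \<in> C" "y \<in> C" for x y
    proof -
      have "f x - f y = t *\<^sub>R (T x - T y)" by (simp add: f_def algebra_simps)
      hence "dist (f x) (f y) = t * norm (T x - T y)" using t0 by (simp add: dist_norm)
      also have "\<dots> \<le> t * norm (x - y)" using TL[OF that] t0 by (simp add: mult_left_mono)
      finally show ?thesis by (simp add: dist_norm)
    qed
    have comp: "complete C" using C(2) by (simp add: complete_eq_closed)
    obtain x where x: "x \<in> C" "f x = x" using Banach_fix[OF comp C(1) t0 fC lip] by blast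
    have "T x - x = (1 - t) *\<^sub>R (T x - x0)"
    proof -
      have "T x - x = T x - f x" using x(2) by simp
      also have "\<dots> = (1 - t) *\<^sub>R (T x - x0)" by (simp add: f_def algebra_simps)
      finally show ?thesis .
    qed
    hence "norm (T x - x) = (1 - t) * norm (T x - x0)" using t0 by simp
    also have "\<dots> \<le> (1 - t) * (2 * R)"
    proof -
      have "T x \<in> C" using TC x by blast
      hence "norm (T x - x0) \<le> norm (T x) + norm x0" using norm_triangle_ineq4 by blast
      also have "\<dots> \<le> 2 * R" using R[OF \<open>T x \<in> C\<close>] R[OF x0] by simp
      finally show ?thesis using t0 by (simp add: mult_left_mono)
    qed
    also have "\<dots> = 2 * R / (real j + 2)" using t1 by simp
    finally show ?thesis using x by blast
  qed
  thus ?thesis by metis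
qed

lemma step_lemma:
  fixes L :: "'a::banach \<Rightarrow> 'b::banach" and C :: "'a set" and u :: "nat \<Rightarrow> 'a"
  assumes iso: "linear_isomorphism L" and UC: "uniformly_convex TYPE('b)"
    and conv: "convex C" and R: "\<And>x. x \<in> C \<Longrightarrow> norm x \<le> R"
    and uC: "\<And>k. u k \<in> C" and eps: "\<epsilon> > 0" and Y: "infinite Y"
  shows "\<exists>Y' y M. Y' \<subseteq> Y \<and> infinite Y' \<and> y \<in> C \<and>
           (\<forall>A. finite A \<longrightarrow> A \<subseteq> Y' \<longrightarrow> norm (\<Sum>k\<in>A. u k - y) \<le> \<epsilon> * real (card A) + M)"
proof -
  have bl: "bounded_linear L" and bij: "bij L" and bli: "bounded_linear (inv L)"
    using iso unfolding linear_isomorphism_def by auto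
  have lin: "linear L" using bl bounded_linear.linear by blast
  obtain B where B: "B > 0" "\<And>x. norm (L x) \<le> norm x * B"
    using bounded_linear.pos_bounded[OF bl] by blast
  obtain K where K: "K > 0" "\<And>z. norm (inv L z) \<le> norm z * K"
    using bounded_linear.pos_bounded[OF bli] by blast
  have invL: "inv L (L x) = x" for x using bij by (simp add: bij_is_inj)
  have nK: "norm x \<le> norm (L x) * K" for x using K(2)[of "L x"] invL[of x] by simp
  define w where "w k = L (u k)" for k
  define c where "c = L (u 0)"
  define R0 where "R0 = 2 * R * B + 1"
  have Rnn: "R \<ge> 0" using R[OF uC[of 0]] norm_ge_zero order_trans by blast
  have "0 \<le> 2 * R * B" using Rnn B(1) by simp
  hence R0: "R0 > 0" unfolding R0_def by linarith
  have wb: "norm (w k - c) \<le> R0" for k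
  proof -
    have "w k - c = L (u k - u 0)" by (simp add: w_def c_def linear_diff[OF lin])
    hence "norm (w k - c) \<le> norm (u k - u 0) * B" using B(2) by simp
    also have "\<dots> \<le> (norm (u k) + norm (u 0)) * B"
      using B(1) norm_triangle_ineq4 by (simp add: mult_right_mono)
    also have "\<dots> \<le> (2 * R) * B" using R[OF uC[of k]] R[OF uC[of 0]] B(1) by (simp add: mult_right_mono)
    finally show ?thesis by (simp add: R0_def)
  qed
  define e' where "e' = \<epsilon> / (2 * K)"
  have e': "e' > 0" using eps K(1) by (simp add: e'_def)
  obtain Y' A0 where Y': "Y' \<subseteq> Y" "infinite Y'" "A0 \<subseteq> Y'" "card A0 > 0"
    and bd: "\<forall>A. finite A \<longrightarrow> A \<subseteq> Y' \<longrightarrow>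
        norm (sum w A - real (card A) *\<^sub>R ((1 / real (card A0)) *\<^sub>R sum w A0))
          \<le> 2 * e' * real (card A) + 2 * real (card A0) * R0"
    using bs_lemma[where w=w and c=c, OF UC R0 wb e' Y] by blast
  define m where "m = card A0"
  have finA0: "finite A0" using Y'(4) card_ge_0_finite by blast
  define y where "y = (1 / real m) *\<^sub>R sum u A0"
  have yC: "y \<in> C"
  proof -
    have "(\<Sum>j\<in>A0. (1 / real m) *\<^sub>R u j) \<in> C"
      using convex_sum[OF finA0 conv, of "\<lambda>_. 1 / real m" u] uC Y'(4) by (simp add: m_def)
    thus ?thesis by (simp add: y_def scaleR_sum_right)
  qed
  have Ly: "L y = (1 / real m) *\<^sub>R sum w A0"
    by (simp add: y_def linear_scale[OF lin] linear_sum[OF lin] w_def)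
  have "norm (\<Sum>k\<in>A. u k - y) \<le> \<epsilon> * real (card A) + 2 * real m * R0 * K"
    if A: "finite A" "A \<subseteq> Y'" for A
  proof -
    have "L (\<Sum>k\<in>A. u k - y) = sum w A - real (card A) *\<^sub>R L y"
      by (simp add: linear_sum[OF lin] linear_diff[OF lin] sum_subtractf w_def sum_constant_scaleR linear_scale[OF lin])
    hence "norm (L (\<Sum>k\<in>A. u k - y)) \<le> 2 * e' * real (card A) + 2 * real m * R0"
      using bd A Ly by (simp add: m_def)
    hence "norm (L (\<Sum>k\<in>A. u k - y)) * K \<le> (2 * e' * real (card A) + 2 * real m * R0) * K"
      using K(1) by (simp add: mult_right_mono)
    also have "\<dots> = \<epsilon> * real (card A) + 2 * real m * R0 * K"
      using K(1) by (simp add: e'_def algebra_simps)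
    finally show ?thesis using nK[of "\<Sum>k\<in>A. u k - y"] by linarith
  qed
  thus ?thesis using Y'(1,2) yC by blast
qed

lemma fp_bound:
  fixes C :: "'a::real_normed_vector set" and u :: "nat \<Rightarrow> 'a"
  assumes cm: "cm_nonexpansive C T" and uC: "\<And>k. u k \<in> C"
    and ua: "\<And>j. norm (T (u j) - u j) \<le> 2 * R / (real j + 2)"
    and Y: "infinite Y" and yC: "y \<in> C" and eps: "\<epsilon> > 0"
    and bd: "\<And>A. finite A \<Longrightarrow> A \<subseteq> Y \<Longrightarrow> norm (\<Sum>k\<in>A. u k - y) \<le> \<epsilon> * real (card A) + M"
  shows "norm (T y - y) \<le> 3 * \<epsilon>"
proof -
  define e where "e = enumerate Y"
  have se: "strict_mono e" using strict_mono_enumerate[OF Y] e_def by simp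
  have eY: "e j \<in> Y" for j using enumerate_in_set[OF Y] e_def by simp
  have inje: "inj e" using se strict_mono_imp_inj_on by blast
  define v where "v j = u (e j)" for j
  have vC: "range v \<subseteq> C" using uC by (auto simp: v_def)
  have cm1: "cm_sup n v y i \<le> \<epsilon> * real n + M" for n i
  proof -
    let ?S = "(\<lambda>A. norm (\<Sum>k\<in>A. (v (i + k) - y))) ` Pow {1..n}"
    have "Max ?S \<le> \<epsilon> * real n + M"
    proof (rule Max.boundedI)
      show "finite ?S" by simp
      show "?S \<noteq> {}" by blast
      fix a assume "a \<in> ?S"
      then obtain A where A: "A \<subseteq> {1..n}" "a = norm (\<Sum>k\<in>A. (v (i + k) - y))" by blast
      define g where "g k = e (i + k)" for k
      have inj: "inj_on g A" unfolding inj_on_def g_def using inje by (simp add: inj_eq)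
      have finA: "finite A" using A(1) finite_subset by blast
      have "(\<Sum>k\<in>A. (v (i + k) - y)) = (\<Sum>j\<in>g ` A. u j - y)"
        using sum.reindex[OF inj, of "\<lambda>j. u j - y"] by (simp add: v_def g_def comp_def)
      moreover have "g ` A \<subseteq> Y" using eY g_def by auto
      moreover have "card (g ` A) = card A" using card_image[OF inj] .
      moreover have cA: "card A \<le> n" using card_mono[OF _ A(1)] by simp
      ultimately have "a \<le> \<epsilon> * real (card A) + M" using bd[of "g ` A"] finA A(2) by simp
      also have "\<dots> \<le> \<epsilon> * real n + M" using cA eps by simp
      finally show "a \<le> \<epsilon> * real n + M" .
    qed
    thus ?thesis unfolding cm_sup_def .
  qed
  have R0: "0 \<le> R"
  proof -
    have "0 \<le> 2 * R / (real 0 + 2)" using ua[of 0] norm_ge_zero order_trans by blast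
    thus ?thesis by simp
  qed
  have key: "real n * norm (T y - y) \<le> 3 * \<epsilon> * real n + 2 * M + 1" if n: "n \<ge> 1" for n
  proof -
    have le1: "limsup (\<lambda>i. ereal (cm_sup n (\<lambda>j. T (v j)) (T y) i)) \<le> limsup (\<lambda>i. ereal (cm_sup n v y i))"
      using cm vC yC unfolding cm_nonexpansive_def by blast
    have le2: "limsup (\<lambda>i. ereal (cm_sup n v y i)) \<le> ereal (\<epsilon> * real n + M)"
      by (intro Limsup_bounded always_eventually) (simp add: cm1)
    have lt: "ereal (\<epsilon> * real n + M) < ereal (\<epsilon> * real n + M + 1)" by simp
    have "limsup (\<lambda>i. ereal (cm_sup n (\<lambda>j. T (v j)) (T y) i)) < ereal (\<epsilon> * real n + M + 1)"
      using le1 le2 lt by (meson order.trans le_less_trans)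
    hence "eventually (\<lambda>i. ereal (cm_sup n (\<lambda>j. T (v j)) (T y) i) < ereal (\<epsilon> * real n + M + 1)) sequentially"
      by (rule Limsup_lessD)
    hence ev: "eventually (\<lambda>i. cm_sup n (\<lambda>j. T (v j)) (T y) i < \<epsilon> * real n + M + 1) sequentially"
      by (rule eventually_mono) simp
    obtain N1 where N1: "\<And>i. i \<ge> N1 \<Longrightarrow> cm_sup n (\<lambda>j. T (v j)) (T y) i < \<epsilon> * real n + M + 1"
      using ev unfolding eventually_sequentially by blast
    obtain N0 :: nat where N0: "2 * R / \<epsilon> < real N0" using reals_Archimedean2 by blast
    define i where "i = max N0 N1"
    have ci: "cm_sup n (\<lambda>j. T (v j)) (T y) i < \<epsilon> * real n + M + 1" using N1 i_def by simp
    have small: "norm (v (i + k) - T (v (i + k))) \<le> \<epsilon>" for k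
    proof -
      define j where "j = e (i + k)"
      have "i + k \<le> j" using seq_suble[OF se, of "i+k"] j_def by simp
      hence jN: "real N0 \<le> real j" using i_def by simp
      have "2 * R < \<epsilon> * real N0" using N0 eps by (simp add: divide_less_eq mult.commute)
      also have "\<dots> \<le> \<epsilon> * (real j + 2)" using jN eps by simp
      finally have "2 * R / (real j + 2) < \<epsilon>" by (simp add: divide_less_eq mult.commute)
      moreover have "norm (v (i + k) - T (v (i + k))) = norm (T (u j) - u j)"
        by (simp add: v_def j_def norm_minus_commute)
      ultimately show ?thesis using ua[of j] by simp
    qed
    have S1: "norm (\<Sum>k\<in>{1..n}. v (i + k) - y) \<le> cm_sup n v y i"
      unfolding cm_sup_def by (rule Max_ge) auto
    have S2: "norm (\<Sum>k\<in>{1..n}. T (v (i + k)) - T y) \<le> cm_sup n (\<lambda>j. T (v j)) (T y) i"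
      unfolding cm_sup_def by (rule Max_ge) auto
    have eq3: "(\<Sum>k\<in>{1..n}. v (i + k) - T y) = (\<Sum>k\<in>{1..n}. T (v (i + k)) - T y) + (\<Sum>k\<in>{1..n}. v (i + k) - T (v (i + k)))"
      by (simp add: sum.distrib[symmetric])
    have "(\<Sum>k\<in>{1..n}. norm (v (i + k) - T (v (i + k)))) \<le> real (card {1..n}) * \<epsilon>"
      by (rule sum_bounded_above) (rule small)
    hence S4: "norm (\<Sum>k\<in>{1..n}. v (i + k) - T (v (i + k))) \<le> real n * \<epsilon>"
      using norm_sum[of "\<lambda>k. v (i + k) - T (v (i + k))" "{1..n}"] by simp
    have S3: "norm (\<Sum>k\<in>{1..n}. v (i + k) - T y) \<le> cm_sup n (\<lambda>j. T (v j)) (T y) i + real n * \<epsilon>"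
      using eq3 S2 S4 norm_triangle_ineq[of "\<Sum>k\<in>{1..n}. T (v (i + k)) - T y" "\<Sum>k\<in>{1..n}. v (i + k) - T (v (i + k))"]
      by simp
    have "(\<Sum>k\<in>{1..n}. v (i + k) - y) - (\<Sum>k\<in>{1..n}. v (i + k) - T y) = real n *\<^sub>R (T y - y)"
      by (simp add: sum_subtractf sum_constant_scaleR algebra_simps)
    hence "real n * norm (T y - y) = norm ((\<Sum>k\<in>{1..n}. v (i + k) - y) - (\<Sum>k\<in>{1..n}. v (i + k) - T y))"
      by (metis norm_scaleR abs_of_nat)
    also have "\<dots> \<le> norm (\<Sum>k\<in>{1..n}. v (i + k) - y) + norm (\<Sum>k\<in>{1..n}. v (i + k) - T y)"
      by (rule norm_triangle_ineq4)
    also have "\<dots> \<le> 3 * \<epsilon> * real n + 2 * M + 1"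
      using S1 S3 cm1[of n i] ci mult.commute[of "real n" \<epsilon>] by linarith
    finally show ?thesis .
  qed
  have "norm (T y - y) \<le> 3 * \<epsilon> + (2 * M + 1) / real n" if n: "n \<ge> 1" for n
  proof -
    have np: "real n > 0" using n by simp
    have "norm (T y - y) * real n \<le> 3 * \<epsilon> * real n + (2 * M + 1)" using key[OF n] by (simp add: mult.commute)
    hence "norm (T y - y) \<le> (3 * \<epsilon> * real n + (2 * M + 1)) / real n" using np by (simp add: pos_le_divide_eq)
    also have "\<dots> = 3 * \<epsilon> + (2 * M + 1) / real n" using np by (simp add: add_divide_distrib)
    finally show ?thesis .
  qed
  thus ?thesis by (rule limit_arg)
qed

theorem corollary4p9:
  fixes L :: "'a::banach \<Rightarrow> 'b::banach"
  assumes "linear_isomorphism L"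
    and "uniformly_convex TYPE('b)"
  shows "\<forall>C::'a set. \<forall>T. C \<noteq> {} \<and> bounded C \<and> closed C \<and> convex C \<and> cm_nonexpansive C T
           \<longrightarrow> (\<exists>x\<in>C. T x = x)"
proof (intro allI impI)
  fix C :: "'a set" and T
  assume H: "C \<noteq> {} \<and> bounded C \<and> closed C \<and> convex C \<and> cm_nonexpansive C T"
  hence Cne: "C \<noteq> {}" and Cb: "bounded C" and Ccl: "closed C" and Ccv: "convex C"
    and cm: "cm_nonexpansive C T" by auto
  have ne: "nonexpansive_on C T" using cm unfolding cm_nonexpansive_def by blast
  have TC: "T ` C \<subseteq> C" and TL: "\<And>x y. x \<in> C \<Longrightarrow> y \<in> C \<Longrightarrow> norm (T x - T y) \<le> norm (x - y)"
    using ne unfolding nonexpansive_on_def by auto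
  obtain R where R: "R > 0" "\<And>x. x \<in> C \<Longrightarrow> norm x \<le> R" using Cb unfolding bounded_pos by blast
  obtain u where u: "\<And>j. u j \<in> C" "\<And>j. norm (T (u j) - u j) \<le> 2 * R / (real j + 2)"
    using afps[OF Cne Ccl Ccv R(2) ne] by blast
  define Q where "Q Y \<epsilon> p \<longleftrightarrow> fst p \<subseteq> Y \<and> infinite (fst p) \<and> fst (snd p) \<in> C \<and>
      (\<forall>A. finite A \<longrightarrow> A \<subseteq> fst p \<longrightarrow> norm (\<Sum>k\<in>A. u k - fst (snd p)) \<le> \<epsilon> * real (card A) + snd (snd p))"
    for Y \<epsilon> and p :: "nat set \<times> 'a \<times> real"
  define nx where "nx Y \<epsilon> = (SOME p. Q Y \<epsilon> p)" for Y \<epsilon>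
  have nxQ: "Q Y \<epsilon> (nx Y \<epsilon>)" if Yi: "infinite Y" and epp: "\<epsilon> > 0" for Y \<epsilon>
  proof -
    obtain Y' y M where "Y' \<subseteq> Y \<and> infinite Y' \<and> y \<in> C \<and>
           (\<forall>A. finite A \<longrightarrow> A \<subseteq> Y' \<longrightarrow> norm (\<Sum>k\<in>A. u k - y) \<le> \<epsilon> * real (card A) + M)"
      using step_lemma[where u=u, OF assms(1,2) Ccv R(2) u(1) epp Yi] by blast
    hence "Q Y \<epsilon> (Y', y, M)" unfolding Q_def by simp
    thus ?thesis unfolding nx_def by (rule someI)
  qed
  define ep where "ep j = inverse (real (Suc j))" for j
  have ep_pos: "ep j > 0" for j by (simp add: ep_def)
  define sq where "sq = rec_nat (nx UNIV (ep 0)) (\<lambda>j p. nx (fst p) (ep (Suc j)))"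
  have sq0: "sq 0 = nx UNIV (ep 0)" by (simp add: sq_def)
  have sqS: "sq (Suc j) = nx (fst (sq j)) (ep (Suc j))" for j by (simp add: sq_def)
  have Qs: "infinite (fst (sq j)) \<and> Q (if j = 0 then UNIV else fst (sq (j - 1))) (ep j) (sq j)" for j
  proof (induction j)
    case 0
    have "Q UNIV (ep 0) (sq 0)" using nxQ[of UNIV "ep 0"] ep_pos sq0 by simp
    then show ?case unfolding Q_def by simp
  next
    case (Suc j)
    have "Q (fst (sq j)) (ep (Suc j)) (sq (Suc j))" using nxQ[of "fst (sq j)" "ep (Suc j)"] Suc ep_pos sqS by simp
    then show ?case unfolding Q_def by simp
  qed
  define Ys where "Ys j = fst (sq j)" for j
  define ys where "ys j = fst (snd (sq j))" for j
  define Ms where "Ms j = snd (snd (sq j))" for j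
  have Ysinf: "infinite (Ys j)" for j using Qs[of j] by (simp add: Ys_def)
  have ysC: "ys j \<in> C" for j using Qs[of j] by (simp add: ys_def Q_def)
  have bd: "\<And>A. finite A \<Longrightarrow> A \<subseteq> Ys j \<Longrightarrow> norm (\<Sum>k\<in>A. u k - ys j) \<le> ep j * real (card A) + Ms j" for j
    using Qs[of j] by (simp add: Ys_def ys_def Ms_def Q_def)
  have nest1: "Ys (Suc j) \<subseteq> Ys j" for j using Qs[of "Suc j"] by (simp add: Ys_def Q_def)
  have nest: "Ys k \<subseteq> Ys j" if "j \<le> k" for j k
    using lift_Suc_antimono_le[of Ys, OF nest1 that] .
  have close: "norm (ys j - ys k) \<le> ep j + ep k" if jk: "j \<le> k" for j k
  proof (rule limit_arg[where c = "Ms j + Ms k"])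
    fix N :: nat assume N: "N \<ge> 1"
    obtain A where A: "finite A" "card A = N" "A \<subseteq> Ys k"
      using infinite_arbitrarily_large[OF Ysinf[of k]] by blast
    have Aj: "A \<subseteq> Ys j" using A(3) nest[OF jk] by blast
    have b1: "norm (\<Sum>i\<in>A. u i - ys j) \<le> ep j * real N + Ms j" using bd[OF A(1) Aj] A(2) by simp
    have b2: "norm (\<Sum>i\<in>A. u i - ys k) \<le> ep k * real N + Ms k" using bd[OF A(1) A(3)] A(2) by simp
    have "(\<Sum>i\<in>A. u i - ys k) - (\<Sum>i\<in>A. u i - ys j) = real N *\<^sub>R (ys j - ys k)"
      using A(2) by (simp add: sum_subtractf sum_constant_scaleR algebra_simps)
    hence "real N * norm (ys j - ys k) = norm ((\<Sum>i\<in>A. u i - ys k) - (\<Sum>i\<in>A. u i - ys j))"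
      by (metis norm_scaleR abs_of_nat)
    also have "\<dots> \<le> norm (\<Sum>i\<in>A. u i - ys k) + norm (\<Sum>i\<in>A. u i - ys j)"
      by (rule norm_triangle_ineq4)
    also have "\<dots> \<le> (ep j + ep k) * real N + (Ms j + Ms k)" using b1 b2 by (simp add: algebra_simps)
    finally have "norm (ys j - ys k) * real N \<le> (ep j + ep k) * real N + (Ms j + Ms k)"
      by (simp add: mult.commute)
    moreover have np: "real N > 0" using N by simp
    ultimately have "norm (ys j - ys k) \<le> ((ep j + ep k) * real N + (Ms j + Ms k)) / real N"
      by (simp add: pos_le_divide_eq)
    also have "\<dots> = ep j + ep k + (Ms j + Ms k) / real N" using np by (simp add: add_divide_distrib)
    finally show "norm (ys j - ys k) \<le> ep j + ep k + (Ms j + Ms k) / real N" .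
  qed
  have ep_mono: "ep k \<le> ep j" if "j \<le> k" for j k
    using that by (simp add: ep_def le_imp_inverse_le)
  have cauchy: "Cauchy ys"
  proof (rule metric_CauchyI)
    fix e :: real assume e: "e > 0"
    obtain N :: nat where N: "2 / e < real N" using reals_Archimedean2 by blast
    have epN: "2 * ep N < e"
    proof -
      have "2 < e * real N" using N e by (simp add: divide_less_eq mult.commute)
      also have "\<dots> < e * real (Suc N)" using e by simp
      finally have "2 / real (Suc N) < e" by (simp add: divide_less_eq mult.commute)
      thus ?thesis by (simp add: ep_def divide_inverse)
    qed
    show "\<exists>M. \<forall>m\<ge>M. \<forall>n\<ge>M. dist (ys m) (ys n) < e"
    proof (intro exI allI impI)
      fix m n assume mn: "N \<le> m" "N \<le> n"
      have "dist (ys m) (ys n) \<le> ep m + ep n"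
      proof (cases "m \<le> n")
        case True thus ?thesis using close[OF True] by (simp add: dist_norm)
      next
        case False
        hence "n \<le> m" by simp
        thus ?thesis using close[of n m] by (simp add: dist_norm norm_minus_commute add.commute)
      qed
      also have "\<dots> \<le> 2 * ep N" using ep_mono[OF mn(1)] ep_mono[OF mn(2)] by simp
      finally show "dist (ys m) (ys n) < e" using epN by simp
    qed
  qed
  have comp: "complete C" using Ccl by (simp add: complete_eq_closed)
  have "(\<forall>n. ys n \<in> C) \<and> Cauchy ys" using ysC cauchy by blast
  from comp[unfolded complete_def, rule_format, OF this]
  obtain z where z: "z \<in> C" "ys \<longlonglongrightarrow> z" by blast
  have fpj: "norm (T (ys j) - ys j) \<le> 3 * ep j" for j
    by (rule fp_bound[where u=u and T=T and C=C and Y="Ys j" and y="ys j" and M="Ms j" and R=R and \<epsilon>="ep j"])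
      (auto intro: bd simp: cm u Ysinf ysC ep_pos)
  have bound: "norm (T z - z) \<le> 2 * norm (ys j - z) + 3 * ep j" for j
  proof -
    have e: "T z - z = (T z - T (ys j)) + (T (ys j) - ys j) + (ys j - z)" by simp
    have "norm ((T z - T (ys j)) + (T (ys j) - ys j) + (ys j - z))
        \<le> norm ((T z - T (ys j)) + (T (ys j) - ys j)) + norm (ys j - z)" by (rule norm_triangle_ineq)
    also have "\<dots> \<le> norm (T z - T (ys j)) + norm (T (ys j) - ys j) + norm (ys j - z)"
      by (intro add_right_mono norm_triangle_ineq)
    finally have t: "norm (T z - z) \<le> norm (T z - T (ys j)) + norm (T (ys j) - ys j) + norm (ys j - z)"
      by (subst e)
    have "norm (T z - T (ys j)) \<le> norm (ys j - z)"
      using TL[OF z(1) ysC[of j]] by (simp add: norm_minus_commute)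
    thus ?thesis using t fpj[of j] by linarith
  qed
  have lim0: "(\<lambda>j. 2 * norm (ys j - z) + 3 * ep j) \<longlonglongrightarrow> 0"
  proof -
    have "(\<lambda>j. ys j - z) \<longlonglongrightarrow> 0" using z(2) by (rule LIM_zero)
    hence a: "(\<lambda>j. norm (ys j - z)) \<longlonglongrightarrow> 0" by (rule tendsto_norm_zero)
    have b: "ep \<longlonglongrightarrow> 0" unfolding ep_def by (rule LIMSEQ_inverse_real_of_nat)
    have "(\<lambda>j. 2 * norm (ys j - z) + 3 * ep j) \<longlonglongrightarrow> 2 * 0 + 3 * 0"
      by (intro tendsto_add tendsto_mult tendsto_const a b)
    thus ?thesis by simp
  qed
  have "norm (T z - z) \<le> 0"
    by (rule LIMSEQ_le_const[OF lim0]) (intro exI allI impI, rule bound)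
  hence "T z = z" by simp
  thus "\<exists>x\<in>C. T x = x" using z(1) by blast
qed

end
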